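(* Let $p$ be an odd prime, let $G_p=V\rtimes C$ be as described in the context, and let $c$ be a fixed generator of $C$. Let $X=\{c,w_2,\dots,w_n\}$ where $w_2,\dots,w_n\in V$, and assume $X$ generates $G_p$. Then every $v\in V$ can be written as a word of length at most $3(p-1)$ in $X$ (inverses permitted) in which the elements $w_2,\dots,w_n$ occur a total of at most $p-1$ times.
   Context: The wreath product $W_p=C_2\wr C_p$ is $U\rtimes C_p$ with $U=\mathbb{F}_2^{\,p}$ and a generator of the cyclic group $C_p$ of order $p$ acting on $U$ by cyclically permuting coordinates. Its center is $T=\{(0,\dots,0),(1,\dots,1)\}$, and $G_p=W_p/T=V\rtimes C$, where $V=U/T$ is an $\mathbb{F}_2$-vector space of dimension $p-1$ (a normal subgroup of $G_p$) and $C$, the image of $C_p$, is cyclic of order $p$. *)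

theory Defs
  imports "HOL-Algebra.Coset" "HOL-Algebra.Generated_Groups" "HOL-Computational_Algebra.Primes"
begin

text \<open>Concrete model of the wreath product W_p = C_2 wr C_p.
  An element of U = F_2^p is modelled as its support, a subset of {0..<p};
  addition in U is symmetric difference.  An element of W_p is a pair (u,k)
  with u in U and k in {0..<p} (k standing for the k-th power of the generator
  of C_p).\<close>

definition shift :: "nat \<Rightarrow> nat \<Rightarrow> nat set \<Rightarrow> nat set" where
  "shift p k u = (\<lambda>i. (i + k) mod p) ` u"

definition symdiff :: "nat set \<Rightarrow> nat set \<Rightarrow> nat set" where
  "symdiff u v = (u - v) \<union> (v - u)"

definition Wmult :: "nat \<Rightarrow> nat set \<times> nat \<Rightarrow> nat set \<times> nat \<Rightarrow> nat set \<times> nat" where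
  "Wmult p x y = (symdiff (fst x) (shift p (snd x) (fst y)), (snd x + snd y) mod p)"

definition Wp :: "nat \<Rightarrow> (nat set \<times> nat) monoid" where
  "Wp p = \<lparr> carrier = {x. fst x \<subseteq> {..<p} \<and> snd x < p},
            monoid.mult = Wmult p,
            one = ({}, 0) \<rparr>"

text \<open>The centre T = {(0,...,0),(1,...,1)} of W_p.\<close>
definition Tp :: "nat \<Rightarrow> (nat set \<times> nat) set" where
  "Tp p = {({}, 0), ({..<p}, 0)}"

definition Gp :: "nat \<Rightarrow> (nat set \<times> nat) set monoid" where
  "Gp p = Wp p Mod Tp p"

definition Vp :: "nat \<Rightarrow> (nat set \<times> nat) set set" where
  "Vp p = {Tp p #>\<^bsub>Wp p\<^esub> (u, 0) | u. u \<subseteq> {..<p}}"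

definition Cp :: "nat \<Rightarrow> (nat set \<times> nat) set set" where
  "Cp p = {Tp p #>\<^bsub>Wp p\<^esub> ({}, k) | k. k < p}"

definition word_eval :: "('a, 'b) monoid_scheme \<Rightarrow> ('a \<times> bool) list \<Rightarrow> 'a" where
  "word_eval G ws = foldr (\<lambda>(x, b) acc. (if b then inv\<^bsub>G\<^esub> x else x) \<otimes>\<^bsub>G\<^esub> acc) ws \<one>\<^bsub>G\<^esub>"

end

theory Submission
  imports Defs "HOL-Algebra.FiniteProduct"
begin


lemma shift_sub: "0 < p \<Longrightarrow> shift p k u \<subseteq> {..<p}"
  by (auto simp: shift_def)

lemma shift_shift: "shift p a (shift p b u) = shift p (a+b) u"
  unfolding shift_def image_image
  by (rule image_cong) (simp_all add: mod_add_right_eq add.commute add.left_commute)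

lemma shift_mod: "shift p (k mod p) u = shift p k u"
  unfolding shift_def by (simp add: mod_add_right_eq)

lemma shift_0: "u \<subseteq> {..<p} \<Longrightarrow> shift p 0 u = u"
proof -
  assume a: "u \<subseteq> {..<p}"
  have "(\<lambda>i. (i+0) mod p) ` u = (\<lambda>i. i) ` u"
    by (rule image_cong) (use a in auto)
  then show ?thesis unfolding shift_def by simp
qed

lemma shift_p: "u \<subseteq> {..<p} \<Longrightarrow> shift p p u = u"
  using shift_0[of u p] shift_mod[of p p u] by simp

lemma inj_shift: "inj_on (\<lambda>i::nat. (i+k) mod p) {..<p}"
proof (rule inj_onI)
  fix i j assume "i \<in> {..<p}" "j \<in> {..<p}" and eq: "(i + k) mod p = (j + k) mod p"
  have "\<exists>q1 q2. i + k + p*q1 = j + k + p*q2"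
    using nat_mod_eq_iff[THEN iffD1, OF eq] .
  then obtain q1 q2 where "i + k + p*q1 = j + k + p*q2" by blast
  then have "i + p*q1 = j + p*q2" by arith
  then have "i mod p = j mod p" unfolding nat_mod_eq_iff by blast
  then show "i = j" using \<open>i \<in> {..<p}\<close> \<open>j \<in> {..<p}\<close> by simp
qed

lemma shift_symdiff: "u \<subseteq> {..<p} \<Longrightarrow> v \<subseteq> {..<p} \<Longrightarrow>
   shift p k (symdiff u v) = symdiff (shift p k u) (shift p k v)"
proof -
  assume a: "u \<subseteq> {..<p}" "v \<subseteq> {..<p}"
  have 1: "(\<lambda>i. (i+k) mod p) ` (u - v) = (\<lambda>i. (i+k) mod p) ` u - (\<lambda>i. (i+k) mod p) ` v"
    by (rule inj_on_image_set_diff[OF inj_shift]) (use a in auto)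
  have 2: "(\<lambda>i. (i+k) mod p) ` (v - u) = (\<lambda>i. (i+k) mod p) ` v - (\<lambda>i. (i+k) mod p) ` u"
    by (rule inj_on_image_set_diff[OF inj_shift]) (use a in auto)
  show ?thesis unfolding shift_def symdiff_def image_Un 1 2 by (rule refl)
qed

lemma shift_full: "0 < p \<Longrightarrow> shift p k {..<p} = {..<p}"
  unfolding shift_def
  by (rule endo_inj_surj) (simp_all add: inj_shift image_subset_iff)

lemma Wp_carrier: "carrier (Wp p) = {x. fst x \<subseteq> {..<p} \<and> snd x < p}"
  by (simp add: Wp_def)
lemma Wp_mult: "x \<otimes>\<^bsub>Wp p\<^esub> y = Wmult p x y"
  by (simp add: Wp_def)
lemma Wp_one: "\<one>\<^bsub>Wp p\<^esub> = ({}, 0)"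
  by (simp add: Wp_def)

lemma symdiff_sub: "u \<subseteq> A \<Longrightarrow> v \<subseteq> A \<Longrightarrow> symdiff u v \<subseteq> A"
  by (auto simp: symdiff_def)

lemma Wp_group: assumes p: "0 < p" shows "group (Wp p)"
proof (rule groupI)
  fix x y assume "x \<in> carrier (Wp p)" "y \<in> carrier (Wp p)"
  then show "x \<otimes>\<^bsub>Wp p\<^esub> y \<in> carrier (Wp p)"
    using p by (simp add: Wp_carrier Wp_mult Wmult_def symdiff_sub shift_sub)
next
  show "\<one>\<^bsub>Wp p\<^esub> \<in> carrier (Wp p)" using p by (simp add: Wp_carrier Wp_one)
next
  fix x y z assume xyz: "x \<in> carrier (Wp p)" "y \<in> carrier (Wp p)" "z \<in> carrier (Wp p)"
  obtain a k where x: "x = (a,k)" by (cases x)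
  obtain b l where y: "y = (b,l)" by (cases y)
  obtain d m where z: "z = (d,m)" by (cases z)
  have ab: "a \<subseteq> {..<p}" "b \<subseteq> {..<p}" "d \<subseteq> {..<p}" using xyz x y z by (auto simp: Wp_carrier)
  have 1: "shift p k (symdiff b (shift p l d)) = symdiff (shift p k b) (shift p (k+l) d)"
    using shift_symdiff[OF ab(2) shift_sub[OF p], of k l d] by (simp add: shift_shift)
  have 2: "shift p ((k+l) mod p) d = shift p (k+l) d" by (rule shift_mod)
  have 3: "((k+l) mod p + m) mod p = (k + (l+m) mod p) mod p"
    by (simp add: mod_add_left_eq mod_add_right_eq add.assoc)
  have 4: "symdiff (symdiff a (shift p k b)) (shift p (k+l) d) = symdiff a (symdiff (shift p k b) (shift p (k+l) d))"
    by (auto simp: symdiff_def)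
  show "x \<otimes>\<^bsub>Wp p\<^esub> y \<otimes>\<^bsub>Wp p\<^esub> z = x \<otimes>\<^bsub>Wp p\<^esub> (y \<otimes>\<^bsub>Wp p\<^esub> z)"
    unfolding x y z Wp_mult Wmult_def fst_conv snd_conv 1 2 3 4 ..

next
  fix x assume "x \<in> carrier (Wp p)"
  then show "\<one>\<^bsub>Wp p\<^esub> \<otimes>\<^bsub>Wp p\<^esub> x = x"
    by (cases x) (simp add: Wp_carrier Wp_one Wp_mult Wmult_def shift_0 symdiff_def)
next
  fix x assume xc: "x \<in> carrier (Wp p)"
  obtain a k where x: "x = (a,k)" by (cases x)
  have a: "a \<subseteq> {..<p}" and k: "k < p" using xc x by (auto simp: Wp_carrier)
  have "shift p ((p - k) mod p) a = shift p (p-k) a" by (rule shift_mod)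
  then have e: "(shift p (p - k) a, (p - k) mod p) \<otimes>\<^bsub>Wp p\<^esub> x = \<one>\<^bsub>Wp p\<^esub>"
  proof -
    have "symdiff (shift p (p - k) a) (shift p ((p - k) mod p) (fst x)) = {}"
      by (simp add: x shift_mod symdiff_def)
    moreover have "((p - k) mod p + snd x) mod p = 0"
      using k by (simp add: x mod_add_left_eq)
    ultimately show ?thesis by (simp add: Wp_mult Wmult_def Wp_one)
  qed
  have "(shift p (p - k) a, (p - k) mod p) \<in> carrier (Wp p)"
    using p by (simp add: Wp_carrier shift_sub)
  then show "\<exists>y\<in>carrier (Wp p). y \<otimes>\<^bsub>Wp p\<^esub> x = \<one>\<^bsub>Wp p\<^esub>"
    using e by blast
qed


definition cs :: "nat \<Rightarrow> nat set \<times> nat \<Rightarrow> (nat set \<times> nat) set" where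
  "cs p a = Tp p #>\<^bsub>Wp p\<^esub> a"

context fixes p :: nat assumes p: "0 < p"
begin

interpretation W: group "Wp p" by (rule Wp_group[OF p])

lemma snd_mult: "snd (x \<otimes>\<^bsub>Wp p\<^esub> y) = (snd x + snd y) mod p"
  by (simp add: Wp_mult Wmult_def)

lemma fst_mult0: "fst (x \<otimes>\<^bsub>Wp p\<^esub> (u, 0)) = symdiff (fst x) (shift p (snd x) u)"
  by (simp add: Wp_mult Wmult_def)

lemma Tp_sub: "Tp p \<subseteq> carrier (Wp p)"
  using p by (simp add: Tp_def Wp_carrier)

lemma full_sq: "({..<p}, 0) \<otimes>\<^bsub>Wp p\<^esub> ({..<p}, 0) = ({}, 0)"
  by (simp add: Wp_mult Wmult_def shift_0 symdiff_def)

lemma Tp_subgroup: "subgroup (Tp p) (Wp p)"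
proof (rule W.subgroupI)
  show "Tp p \<subseteq> carrier (Wp p)" by (rule Tp_sub)
  show "Tp p \<noteq> {}" by (simp add: Tp_def)
next
  fix a assume a: "a \<in> Tp p"
  have "a \<otimes>\<^bsub>Wp p\<^esub> a = \<one>\<^bsub>Wp p\<^esub>"
    using a full_sq by (auto simp: Tp_def Wp_one Wp_mult Wmult_def shift_def symdiff_def)
  then have "inv\<^bsub>Wp p\<^esub> a = a" using a Tp_sub by (intro W.inv_equality) auto
  then show "inv\<^bsub>Wp p\<^esub> a \<in> Tp p" using a by simp
next
  fix a b assume "a \<in> Tp p" "b \<in> Tp p"
  then show "a \<otimes>\<^bsub>Wp p\<^esub> b \<in> Tp p"
    using full_sq by (auto simp: Tp_def Wp_mult Wmult_def shift_def symdiff_def)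
qed

lemma Tp_central: "x \<in> carrier (Wp p) \<Longrightarrow> h \<in> Tp p \<Longrightarrow> x \<otimes>\<^bsub>Wp p\<^esub> h = h \<otimes>\<^bsub>Wp p\<^esub> x"
proof -
  assume x: "x \<in> carrier (Wp p)" and h: "h \<in> Tp p"
  obtain a k where xa: "x = (a, k)" by (cases x)
  have a: "a \<subseteq> {..<p}" "k < p" using x xa by (auto simp: Wp_carrier)
  have s0: "shift p 0 a = a" by (rule shift_0[OF a(1)])
  have "shift p k {} = {}" by (simp add: shift_def)
  then show ?thesis using h a s0 shift_full[OF p, of k]
    by (auto simp: xa Tp_def Wp_mult Wmult_def symdiff_def)
qed

lemma Tp_normal: "Tp p \<lhd> Wp p"
  unfolding W.normal_inv_iff
proof (intro conjI ballI)
  show "subgroup (Tp p) (Wp p)" by (rule Tp_subgroup)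
next
  fix x h assume x: "x \<in> carrier (Wp p)" and h: "h \<in> Tp p"
  have hc: "h \<in> carrier (Wp p)" using h Tp_sub by auto
  have "x \<otimes>\<^bsub>Wp p\<^esub> h \<otimes>\<^bsub>Wp p\<^esub> inv\<^bsub>Wp p\<^esub> x = h"
    using Tp_central[OF x h] x hc by (simp add: W.m_assoc)
  then show "x \<otimes>\<^bsub>Wp p\<^esub> h \<otimes>\<^bsub>Wp p\<^esub> inv\<^bsub>Wp p\<^esub> x \<in> Tp p" using h by simp
qed

interpretation N: normal "Tp p" "Wp p" by (rule Tp_normal)

lemma Gp_group: "group (Gp p)"
  unfolding Gp_def by (rule N.factorgroup_is_group)

interpretation Gr: group "Gp p" by (rule Gp_group)

lemma Gp_carrier: "carrier (Gp p) = cs p ` carrier (Wp p)"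
  unfolding Gp_def cs_def by (rule carrier_FactGroup)

lemma Gp_mult: "a \<in> carrier (Wp p) \<Longrightarrow> b \<in> carrier (Wp p) \<Longrightarrow>
   cs p a \<otimes>\<^bsub>Gp p\<^esub> cs p b = cs p (a \<otimes>\<^bsub>Wp p\<^esub> b)"
  unfolding Gp_def cs_def by (simp add: N.rcos_sum)

lemma Gp_one: "\<one>\<^bsub>Gp p\<^esub> = cs p ({}, 0)"
  unfolding Gp_def cs_def using W.coset_mult_one[OF Tp_sub] by (simp add: Wp_one)

lemma cs_car: "a \<in> carrier (Wp p) \<Longrightarrow> cs p a \<in> carrier (Gp p)"
  using Gp_carrier by auto

lemma Gp_inv: "a \<in> carrier (Wp p) \<Longrightarrow> inv\<^bsub>Gp p\<^esub> (cs p a) = cs p (inv\<^bsub>Wp p\<^esub> a)"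
  using Gp_mult[of "inv\<^bsub>Wp p\<^esub> a" a] Gp_one
  by (intro Gr.inv_equality) (auto simp: cs_car Wp_one)

lemma cs_formula: "(u, k) \<in> carrier (Wp p) \<Longrightarrow> cs p (u, k) = {(u, k), (symdiff {..<p} u, k)}"
proof -
  assume uk: "(u, k) \<in> carrier (Wp p)"
  then have u: "u \<subseteq> {..<p}" "k < p" by (auto simp: Wp_carrier)
  have "cs p (u, k) = {({}, 0) \<otimes>\<^bsub>Wp p\<^esub> (u, k), ({..<p}, 0) \<otimes>\<^bsub>Wp p\<^esub> (u, k)}"
    unfolding cs_def r_coset_def Tp_def by auto
  also have "\<dots> = {(u, k), (symdiff {..<p} u, k)}"
    using u shift_0[OF u(1)] by (simp add: Wp_mult Wmult_def symdiff_def)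
  finally show ?thesis .
qed

lemma cs_snd: "a \<in> carrier (Wp p) \<Longrightarrow> b \<in> carrier (Wp p) \<Longrightarrow> cs p a = cs p b \<Longrightarrow> snd a = snd b"
proof -
  assume a: "a \<in> carrier (Wp p)" and b: "b \<in> carrier (Wp p)" and e: "cs p a = cs p b"
  obtain u k where ua: "a = (u, k)" by (cases a)
  obtain v l where vb: "b = (v, l)" by (cases b)
  have "(u, k) \<in> cs p (v, l)" using e cs_formula a ua vb by auto
  then show ?thesis using cs_formula b vb ua by auto
qed

lemma Vp_char: "Vp p = cs p ` {a \<in> carrier (Wp p). snd a = 0}"
proof (rule equalityI; rule subsetI)
  fix X assume "X \<in> Vp p"
  then obtain u where u: "u \<subseteq> {..<p}" "X = cs p (u, 0)" unfolding Vp_def cs_def by blast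
  then have "(u, 0) \<in> {a \<in> carrier (Wp p). snd a = 0}" using p by (simp add: Wp_carrier)
  then show "X \<in> cs p ` {a \<in> carrier (Wp p). snd a = 0}" using u by blast
next
  fix X assume "X \<in> cs p ` {a \<in> carrier (Wp p). snd a = 0}"
  then obtain a where a: "a \<in> carrier (Wp p)" "snd a = 0" "X = cs p a" by blast
  obtain u k where uk: "a = (u, k)" by (cases a)
  then have "X = cs p (u, 0)" "u \<subseteq> {..<p}" using a by (auto simp: Wp_carrier)
  then show "X \<in> Vp p" unfolding Vp_def cs_def by blast
qed

lemma Vp_elem: "X \<in> Vp p \<Longrightarrow> \<exists>u. u \<subseteq> {..<p} \<and> X = cs p (u, 0)"
  unfolding Vp_def cs_def by blast

lemma Vp_intro: "u \<subseteq> {..<p} \<Longrightarrow> cs p (u, 0) \<in> Vp p"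
  unfolding Vp_def cs_def by blast

lemma car0: "u \<subseteq> {..<p} \<Longrightarrow> (u, 0) \<in> carrier (Wp p)"
  using p by (simp add: Wp_carrier)

lemma mult00: "u \<subseteq> {..<p} \<Longrightarrow> v \<subseteq> {..<p} \<Longrightarrow> (u, 0) \<otimes>\<^bsub>Wp p\<^esub> (v, 0) = (symdiff u v, 0)"
  using shift_0[of v p] by (simp add: Wp_mult Wmult_def)

lemma V_mult: "X \<in> Vp p \<Longrightarrow> Y \<in> Vp p \<Longrightarrow> \<exists>u v. u \<subseteq> {..<p} \<and> v \<subseteq> {..<p} \<and> X = cs p (u,0) \<and> Y = cs p (v,0) \<and>
   X \<otimes>\<^bsub>Gp p\<^esub> Y = cs p (symdiff u v, 0)"
proof -
  assume X: "X \<in> Vp p" and Y: "Y \<in> Vp p"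
  obtain u where u: "u \<subseteq> {..<p}" "X = cs p (u,0)" using Vp_elem[OF X] by blast
  obtain v where v: "v \<subseteq> {..<p}" "Y = cs p (v,0)" using Vp_elem[OF Y] by blast
  note uv = u(1) v(1) u(2) v(2)
  then have "X \<otimes>\<^bsub>Gp p\<^esub> Y = cs p (symdiff u v, 0)"
    using Gp_mult[OF car0 car0] mult00 by simp
  then show ?thesis using uv by blast
qed

lemma symdiff_sub': "u \<subseteq> {..<p} \<Longrightarrow> v \<subseteq> {..<p} \<Longrightarrow> symdiff u v \<subseteq> {..<p}"
  by (rule symdiff_sub)

lemma Vp_subgroup: "subgroup (Vp p) (Gp p)"
proof (rule Gr.subgroupI)
  show "Vp p \<subseteq> carrier (Gp p)"
  proof
    fix X assume "X \<in> Vp p"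
    then have "\<exists>u. u \<subseteq> {..<p} \<and> X = cs p (u, 0)" by (rule Vp_elem)
    then obtain u where u: "u \<subseteq> {..<p}" "X = cs p (u, 0)" by blast
    then show "X \<in> carrier (Gp p)" using cs_car[OF car0[OF u(1)]] by simp
  qed
  show "Vp p \<noteq> {}" using Vp_intro[of "{}"] by blast
next
  fix X assume X: "X \<in> Vp p"
  then have "\<exists>u. u \<subseteq> {..<p} \<and> X = cs p (u, 0)" by (rule Vp_elem)
    then obtain u where u: "u \<subseteq> {..<p}" "X = cs p (u, 0)" by blast
  have e1: "X \<otimes>\<^bsub>Gp p\<^esub> X = cs p (symdiff u u, 0)" using u Gp_mult[OF car0 car0] mult00 by simp
  have e2: "cs p (symdiff u u, 0) = \<one>\<^bsub>Gp p\<^esub>" by (simp add: Gp_one symdiff_def)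
  have Xc: "X \<in> carrier (Gp p)" using u cs_car[OF car0[OF u(1)]] by simp
  have "inv\<^bsub>Gp p\<^esub> X = X" using e1 e2 Xc by (intro Gr.inv_equality) simp_all
  then show "inv\<^bsub>Gp p\<^esub> X \<in> Vp p" using X by simp
next
  fix X Y assume XY: "X \<in> Vp p" "Y \<in> Vp p"
  obtain u v where uv: "u \<subseteq> {..<p}" "v \<subseteq> {..<p}" "X \<otimes>\<^bsub>Gp p\<^esub> Y = cs p (symdiff u v, 0)"
    using V_mult[OF XY] by blast
  show "X \<otimes>\<^bsub>Gp p\<^esub> Y \<in> Vp p" unfolding uv(3) by (rule Vp_intro[OF symdiff_sub[OF uv(1,2)]])
qed

lemma Vp_comm: "X \<in> Vp p \<Longrightarrow> Y \<in> Vp p \<Longrightarrow> X \<otimes>\<^bsub>Gp p\<^esub> Y = Y \<otimes>\<^bsub>Gp p\<^esub> X"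
proof -
  assume XY: "X \<in> Vp p" "Y \<in> Vp p"
  obtain u v where uv: "u \<subseteq> {..<p}" "v \<subseteq> {..<p}" "X = cs p (u,0)" "Y = cs p (v,0)"
    "X \<otimes>\<^bsub>Gp p\<^esub> Y = cs p (symdiff u v, 0)" using V_mult[OF XY] by blast
  have "Y \<otimes>\<^bsub>Gp p\<^esub> X = cs p (symdiff v u, 0)" using uv Gp_mult[OF car0 car0] mult00 by simp
  moreover have "symdiff v u = symdiff u v" by (auto simp: symdiff_def)
  ultimately show ?thesis using uv by simp
qed

lemma Vp_sq: "X \<in> Vp p \<Longrightarrow> X \<otimes>\<^bsub>Gp p\<^esub> X = \<one>\<^bsub>Gp p\<^esub>"
proof -
  assume X: "X \<in> Vp p"
  then have "\<exists>u. u \<subseteq> {..<p} \<and> X = cs p (u, 0)" by (rule Vp_elem)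
    then obtain u where u: "u \<subseteq> {..<p}" "X = cs p (u, 0)" by blast
  have "X \<otimes>\<^bsub>Gp p\<^esub> X = cs p (symdiff u u, 0)" using u Gp_mult[OF car0 car0] mult00 by simp
  also have "\<dots> = \<one>\<^bsub>Gp p\<^esub>" by (simp add: Gp_one symdiff_def)
  finally show ?thesis .
qed

lemma Vp_norm: "g \<in> carrier (Gp p) \<Longrightarrow> X \<in> Vp p \<Longrightarrow> g \<otimes>\<^bsub>Gp p\<^esub> X \<otimes>\<^bsub>Gp p\<^esub> inv\<^bsub>Gp p\<^esub> g \<in> Vp p"
proof -
  assume g: "g \<in> carrier (Gp p)" and X: "X \<in> Vp p"
  obtain b where b: "b \<in> carrier (Wp p)" "g = cs p b" using g Gp_carrier by auto
  obtain a where a: "a \<in> carrier (Wp p)" "snd a = 0" "X = cs p a" using X Vp_char by auto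
  have ib: "inv\<^bsub>Wp p\<^esub> b \<in> carrier (Wp p)" using b by simp
  have e: "g \<otimes>\<^bsub>Gp p\<^esub> X \<otimes>\<^bsub>Gp p\<^esub> inv\<^bsub>Gp p\<^esub> g = cs p (b \<otimes>\<^bsub>Wp p\<^esub> a \<otimes>\<^bsub>Wp p\<^esub> inv\<^bsub>Wp p\<^esub> b)"
    using a b ib by (simp add: Gp_inv Gp_mult)
  have "snd (b \<otimes>\<^bsub>Wp p\<^esub> inv\<^bsub>Wp p\<^esub> b) = 0" using b by (simp add: Wp_one)
  then have s: "(snd b + snd (inv\<^bsub>Wp p\<^esub> b)) mod p = 0" by (simp add: snd_mult)
  have "snd b < p" using b by (simp add: Wp_carrier)
  then have "snd (b \<otimes>\<^bsub>Wp p\<^esub> a \<otimes>\<^bsub>Wp p\<^esub> inv\<^bsub>Wp p\<^esub> b) = 0"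
    using s a by (simp add: snd_mult)
  moreover have "b \<otimes>\<^bsub>Wp p\<^esub> a \<otimes>\<^bsub>Wp p\<^esub> inv\<^bsub>Wp p\<^esub> b \<in> carrier (Wp p)" using a b ib by simp
  ultimately have "b \<otimes>\<^bsub>Wp p\<^esub> a \<otimes>\<^bsub>Wp p\<^esub> inv\<^bsub>Wp p\<^esub> b \<in> {a \<in> carrier (Wp p). snd a = 0}" by simp
  then show ?thesis unfolding e Vp_char by (rule imageI)
qed

lemma Cp_elem: "c \<in> Cp p \<Longrightarrow> \<exists>j<p. c = cs p ({}, j)"
  unfolding Cp_def cs_def by blast

lemma c_pow: "j < p \<Longrightarrow> cs p ({}, j) [^]\<^bsub>Gp p\<^esub> (n::nat) = cs p ({}, (j * n) mod p)"
proof (induction n)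
  case 0 then show ?case by (simp add: Gp_one)
next
  case (Suc n)
  have c1: "({}, (j * n) mod p) \<in> carrier (Wp p)" "({}, j) \<in> carrier (Wp p)"
    using Suc.prems p by (auto simp: Wp_carrier)
  have "({}, (j * n) mod p) \<otimes>\<^bsub>Wp p\<^esub> ({}, j) = ({}, (j * Suc n) mod p)"
  proof -
    have "((j * n) mod p + j) mod p = (j * Suc n) mod p"
      by (metis mod_add_left_eq mult_Suc_right add.commute)
    then show ?thesis by (simp add: Wp_mult Wmult_def shift_def symdiff_def)
  qed
  then show ?case using Suc Gp_mult[OF c1] by simp
qed

lemma Vp_fin_card: "finite (Vp p) \<and> card (Vp p) \<le> 2 ^ (p - 1)"
proof -
  have sub: "Vp p \<subseteq> (\<lambda>u. cs p (u, 0)) ` Pow {..<p-1}"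
  proof
    fix X assume "X \<in> Vp p"
    then have "\<exists>u. u \<subseteq> {..<p} \<and> X = cs p (u, 0)" by (rule Vp_elem)
    then obtain u where u: "u \<subseteq> {..<p}" "X = cs p (u, 0)" by blast
    show "X \<in> (\<lambda>u. cs p (u, 0)) ` Pow {..<p-1}"
    proof (cases "p - 1 \<in> u")
      case False
      have "u \<subseteq> {..<p-1}"
      proof
        fix x assume "x \<in> u"
        then have "x < p" "x \<noteq> p - 1" using u False by auto
        then show "x \<in> {..<p-1}" by simp
      qed
      then show ?thesis using u by (intro image_eqI[of _ _ u]) auto
    next
      case True
      define u' where "u' = {..<p} - u"
      have u': "u' \<subseteq> {..<p-1}"
      proof
        fix x assume "x \<in> u'"
        then have "x < p" "x \<notin> u" unfolding u'_def by auto
        then have "x < p" "x \<noteq> p - 1" using True by auto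
        then show "x \<in> {..<p-1}" by simp
      qed
      have "u' \<subseteq> {..<p}" unfolding u'_def by auto
      then have "cs p (u', 0) = {(u', 0), (symdiff {..<p} u', 0)}" by (rule cs_formula[OF car0])
      also have "\<dots> = {(u, 0), (symdiff {..<p} u, 0)}"
        using u(1) unfolding u'_def symdiff_def by auto
      also have "\<dots> = cs p (u, 0)" by (rule cs_formula[OF car0[OF u(1)], symmetric])
      finally have "X = cs p (u', 0)" using u by simp
      then show ?thesis using u' by (intro image_eqI[of _ _ u']) auto
    qed
  qed
  have "finite (Vp p)" by (rule finite_subset[OF sub]) simp
  moreover have "card (Vp p) \<le> card (Pow {..<p-1})"
  proof -
    have "card (Vp p) \<le> card ((\<lambda>u. cs p (u, 0)) ` Pow {..<p-1})"
      by (rule card_mono[OF _ sub]) simp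
    also have "\<dots> \<le> card (Pow {..<p-1})" by (rule card_image_le) simp
    finally show ?thesis .
  qed
  ultimately show ?thesis by (simp add: card_Pow)
qed

end




fun wd :: "'a \<Rightarrow> nat \<Rightarrow> (nat \<times> 'a) list \<Rightarrow> ('a \<times> bool) list" where
  "wd c k [] = replicate k (c, True)"
| "wd c k ((i,w)#r) = replicate (i-k) (c,False) @ (w,False) # wd c i r"

lemma we_nil: "word_eval G [] = \<one>\<^bsub>G\<^esub>"
  by (simp add: word_eval_def)

lemma we_cons: "word_eval G ((x,b)#ws) = (if b then inv\<^bsub>G\<^esub> x else x) \<otimes>\<^bsub>G\<^esub> word_eval G ws"
  by (simp add: word_eval_def)

lemma (in group) we_closed: "(\<forall>q\<in>set ws. fst q \<in> carrier G) \<Longrightarrow> word_eval G ws \<in> carrier G"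
proof (induction ws)
  case Nil then show ?case by (simp add: we_nil)
next
  case (Cons q ws) then show ?case by (cases q) (simp add: we_cons)
qed

lemma (in group) we_append: "(\<forall>q\<in>set xs. fst q \<in> carrier G) \<Longrightarrow> (\<forall>q\<in>set ys. fst q \<in> carrier G) \<Longrightarrow>
  word_eval G (xs @ ys) = word_eval G xs \<otimes> word_eval G ys"
proof (induction xs)
  case Nil then show ?case using we_closed[of ys] by (simp add: we_nil)
next
  case (Cons q xs)
  then show ?case using we_closed[of xs] we_closed[of ys] by (cases q) (simp add: we_cons m_assoc)
qed

lemma (in group) we_rep_f: "x \<in> carrier G \<Longrightarrow> word_eval G (replicate n (x, False)) = x [^] n"
proof (induction n)
  case 0 then show ?case by (simp add: we_nil)
next
  case (Suc n) then show ?case using nat_pow_Suc2[of x n] by (simp add: we_cons)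
qed

lemma (in group) we_rep_t: "x \<in> carrier G \<Longrightarrow> word_eval G (replicate n (x, True)) = inv (x [^] n)"
proof -
  assume x: "x \<in> carrier G"
  have "word_eval G (replicate n (x, True)) = inv x [^] n"
  proof (induction n)
    case 0 then show ?case by (simp add: we_nil)
  next
    case (Suc n) then show ?case using x nat_pow_Suc2[of "inv x" n] by (simp add: we_cons)
  qed
  then show ?thesis using nat_pow_inv[OF x] by simp
qed

locale absl = group G for G (structure) +
  fixes V c W p
  assumes V_sub: "subgroup V G"
    and V_comm: "\<And>x y. x \<in> V \<Longrightarrow> y \<in> V \<Longrightarrow> x \<otimes> y = y \<otimes> x"
    and V_sq: "\<And>x. x \<in> V \<Longrightarrow> x \<otimes> x = \<one>"
    and V_norm: "\<And>g x. g \<in> carrier G \<Longrightarrow> x \<in> V \<Longrightarrow> g \<otimes> x \<otimes> inv g \<in> V"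
    and c_car: "c \<in> carrier G" and c_ne: "c \<noteq> \<one>"
    and c_p: "c [^] (p::nat) = \<one>"
    and c_V: "\<And>k::nat. c [^] k \<in> V \<Longrightarrow> c [^] k = \<one>"
    and W_sub: "W \<subseteq> V"
    and V_fin: "finite V"
    and cardV: "card V \<le> 2 ^ (p - 1)"
    and gen: "generate G (insert c W) = carrier G"
    and p_pos: "0 < p"
begin

definition VG where "VG = G\<lparr>carrier := V\<rparr>"

lemma VG_simps [simp]: "carrier VG = V" "monoid.mult VG = monoid.mult G" "one VG = one G"
  by (simp_all add: VG_def)

lemma V_car: "V \<subseteq> carrier G" using V_sub subgroup.subset by blast

lemma VG_comm: "comm_group VG"
proof -
  have "group VG" unfolding VG_def by (rule subgroup_imp_group[OF V_sub])
  then show ?thesis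
    by (rule group.group_comm_groupI) (simp add: V_comm)
qed

lemma VG_inv: "x \<in> V \<Longrightarrow> inv\<^bsub>VG\<^esub> x = inv x"
  unfolding VG_def using m_inv_consistent[OF V_sub] by simp

lemma V_inv: "x \<in> V \<Longrightarrow> inv x = x"
  using V_sq V_car by (intro inv_equality) auto

lemma c_notV: "c \<notin> V"
proof
  assume "c \<in> V"
  then have "c [^] (1::nat) \<in> V" using c_car by simp
  then have "c [^] (1::nat) = \<one>" by (rule c_V)
  then show False using c_car c_ne by simp
qed

lemma pow_mod: "c [^] (n::nat) = c [^] (n mod p)"
proof -
  have "c [^] n = c [^] (p * (n div p) + n mod p)" by simp
  also have "\<dots> = (c [^] p) [^] (n div p) \<otimes> c [^] (n mod p)"
    using c_car by (simp add: nat_pow_mult nat_pow_pow)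
  finally show ?thesis using c_car by (simp add: c_p)
qed

definition conjf :: "nat \<times> 'a \<Rightarrow> 'a" where "conjf q = c [^] (fst q) \<otimes> snd q \<otimes> inv (c [^] (fst q))"

definition Conj where "Conj = conjf ` ({..<p} \<times> W)"

lemma conjf_V: "w \<in> V \<Longrightarrow> conjf (i, w) \<in> V"
  unfolding conjf_def using V_norm[OF nat_pow_closed[OF c_car]] by simp

lemma Conj_V: "Conj \<subseteq> V"
  unfolding Conj_def using conjf_V W_sub by auto

definition M where "M = generate VG Conj"

lemma M_sub: "subgroup M VG"
  unfolding M_def using group.generate_is_subgroup[OF comm_group.axioms(2)[OF VG_comm]] Conj_V by simp

lemma M_V: "M \<subseteq> V" using subgroup.subset[OF M_sub] by simp

lemma M_mult: "x \<in> M \<Longrightarrow> y \<in> M \<Longrightarrow> x \<otimes> y \<in> M"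
  using subgroup.m_closed[OF M_sub] by simp

lemma M_one: "\<one> \<in> M"
  using subgroup.one_closed[OF M_sub] by simp

lemma conj_Conj: "h \<in> Conj \<Longrightarrow> c [^] (k::nat) \<otimes> h \<otimes> inv (c [^] k) \<in> Conj"
proof -
  assume "h \<in> Conj"
  then obtain i w where iw: "i < p" "w \<in> W" "h = conjf (i,w)" unfolding Conj_def by auto
  have w: "w \<in> carrier G" using iw W_sub V_car by auto
  have e1: "c [^] (k+i) = c [^] k \<otimes> c [^] i" using c_car by (simp add: nat_pow_mult)
  have e2: "inv (c [^] k \<otimes> c [^] i) = inv (c [^] i) \<otimes> inv (c [^] k)"
    by (rule inv_mult_group) (simp_all add: c_car)
  have "c [^] k \<otimes> h \<otimes> inv (c [^] k) = c [^] (k + i) \<otimes> w \<otimes> inv (c [^] (k+i))"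
    using c_car w by (simp add: iw conjf_def e1 e2 m_assoc)
  also have "\<dots> = conjf ((k+i) mod p, w)"
    unfolding conjf_def using pow_mod[of "k+i"] by simp
  finally show ?thesis
    unfolding Conj_def using iw p_pos by auto
qed

lemma conjM: "m \<in> M \<Longrightarrow> c [^] (k::nat) \<otimes> m \<otimes> inv (c [^] k) \<in> M"
  unfolding M_def
proof (induction m rule: generate.induct)
  case one
  have "c [^] k \<otimes> \<one> \<otimes> inv (c [^] k) = \<one>" using c_car by simp
  then show ?case using generate.one[of VG Conj] by simp
next
  case (incl h)
  show ?case using conj_Conj[OF incl] by (rule generate.incl)
next
  case (inv h)
  have h: "h \<in> V" using inv Conj_V by auto
  then have "inv\<^bsub>VG\<^esub> h = h" using VG_inv V_inv by simp
  have "c [^] k \<otimes> h \<otimes> inv (c [^] k) \<in> generate VG Conj"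
    using conj_Conj[OF inv] by (rule generate.incl)
  then show ?case unfolding \<open>inv\<^bsub>VG\<^esub> h = h\<close> .
next
  case (eng h1 h2)
  have h: "h1 \<in> carrier G" "h2 \<in> carrier G" using eng(1,2) M_V V_car unfolding M_def by auto
  have "c [^] k \<otimes> (h1 \<otimes> h2) \<otimes> inv (c [^] k) = (c [^] k \<otimes> h1 \<otimes> inv (c [^] k)) \<otimes> (c [^] k \<otimes> h2 \<otimes> inv (c [^] k))"
  proof -
    have cancel: "\<And>x. x \<in> carrier G \<Longrightarrow> x \<otimes> inv (c [^] k) \<otimes> c [^] k = x"
      using c_car by (simp add: m_assoc)
    show ?thesis using c_car h by (simp add: m_assoc[symmetric] cancel)
  qed
  then show ?case using generate.eng[OF eng(3,4)] by simp
qed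

lemma W_M: "w \<in> W \<Longrightarrow> w \<in> M"
proof -
  assume w: "w \<in> W"
  then have "w \<in> carrier G" using W_sub V_car by auto
  then have "conjf (0, w) = w" unfolding conjf_def by simp
  then have "w \<in> Conj" unfolding Conj_def using w p_pos by force
  then show ?thesis unfolding M_def by (rule generate.incl)
qed

lemma inv_c: "inv c = c [^] (p - 1)"
proof -
  have "c [^] (p - 1) \<otimes> c = c [^] p" using p_pos c_car
    by (metis Suc_diff_1 nat_pow_Suc)
  then show ?thesis using c_car c_p by (intro inv_equality) auto
qed

lemma gen_form: "g \<in> generate G (insert c W) \<Longrightarrow> \<exists>m\<in>M. \<exists>k::nat. g = m \<otimes> c [^] k"
proof (induction g rule: generate.induct)
  case one
  then show ?case using M_one by (intro bexI[of _ \<one>] exI[of _ 0]) simp_all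
next
  case (incl h)
  show ?case
  proof (cases "h = c")
    case True
    then show ?thesis using M_one c_car by (intro bexI[of _ \<one>] exI[of _ 1]) simp_all
  next
    case False
    then have "h \<in> W" using incl by simp
    then show ?thesis using W_M W_sub V_car by (intro bexI[of _ h] exI[of _ 0]) auto
  qed
next
  case (inv h)
  show ?case
  proof (cases "h = c")
    case True
    then show ?thesis using M_one c_car inv_c by (intro bexI[of _ \<one>] exI[of _ "p - 1"]) simp_all
  next
    case False
    then have "h \<in> W" using inv by simp
    then have "inv h = h" using W_sub V_inv by auto
    then show ?thesis using W_M W_sub V_car \<open>h \<in> W\<close> by (intro bexI[of _ h] exI[of _ 0]) auto
  qed
next
  case (eng g1 g2)
  obtain m1 k1 where 1: "m1 \<in> M" "g1 = m1 \<otimes> c [^] (k1::nat)" using eng(3) by blast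
  obtain m2 k2 where 2: "m2 \<in> M" "g2 = m2 \<otimes> c [^] (k2::nat)" using eng(4) by blast
  have m: "m1 \<in> carrier G" "m2 \<in> carrier G" using 1 2 M_V V_car by auto
  have e: "c [^] (k1 + k2) = c [^] k1 \<otimes> c [^] k2" using c_car by (simp add: nat_pow_mult)
  have "g1 \<otimes> g2 = (m1 \<otimes> (c [^] k1 \<otimes> m2 \<otimes> inv (c [^] k1))) \<otimes> c [^] (k1 + k2)"
    unfolding 1 2 e using m c_car by (simp add: m_assoc inv_solve_left)
  moreover have "m1 \<otimes> (c [^] k1 \<otimes> m2 \<otimes> inv (c [^] k1)) \<in> M"
    using M_mult[OF 1(1) conjM[OF 2(1)]] .
  ultimately show ?case by blast
qed

lemma V_M: "v \<in> V \<Longrightarrow> v \<in> M"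
proof -
  assume v: "v \<in> V"
  then have "v \<in> generate G (insert c W)" using gen V_car by auto
  then obtain m k where mk: "m \<in> M" "v = m \<otimes> c [^] (k::nat)" using gen_form by blast
  have m: "m \<in> V" using mk M_V by auto
  have "c [^] k = inv m \<otimes> v" using mk m V_car c_car by (simp add: inv_solve_left subset_iff)
  then have "c [^] k \<in> V" using m v V_sub by (simp add: subgroup.m_closed subgroup.m_inv_closed)
  then have "c [^] k = \<one>" by (rule c_V)
  then show ?thesis using mk m V_car by auto
qed

lemma VGcm: "comm_monoid VG"
  using VG_comm comm_group_def by blast

lemma W_fin: "finite W" using V_fin W_sub finite_subset by blast

lemma Conj_fin: "finite Conj" unfolding Conj_def using W_fin by simp

abbreviation fp where "fp S \<equiv> finprod VG (\<lambda>x. x) S"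

lemma idPi: "A \<subseteq> V \<Longrightarrow> (\<lambda>x. x) \<in> A \<rightarrow> V" by auto

lemma fp_closed: "S \<subseteq> V \<Longrightarrow> fp S \<in> V"
  using comm_monoid.finprod_closed[OF VGcm, of "\<lambda>x. x" S] idPi by auto

lemma fp_empty: "fp {} = \<one>"
  using comm_monoid.finprod_empty[OF VGcm, of "\<lambda>x. x"] by simp

lemma fp_single: "h \<in> V \<Longrightarrow> fp {h} = h"
  using comm_monoid.finprod_insert[OF VGcm, of "{}" h "\<lambda>x. x"] fp_empty V_car by auto

lemma fp_Un: "finite A \<Longrightarrow> finite B \<Longrightarrow> A \<inter> B = {} \<Longrightarrow> A \<subseteq> V \<Longrightarrow> B \<subseteq> V \<Longrightarrow>
  fp (A \<union> B) = fp A \<otimes> fp B"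
  using comm_monoid.finprod_Un_disjoint[OF VGcm, of A B "\<lambda>x. x"] idPi[of A] idPi[of B] by auto

lemma fp_symdiff:
  assumes "finite A" "finite B" "A \<subseteq> V" "B \<subseteq> V"
  shows "fp A \<otimes> fp B = fp ((A - B) \<union> (B - A))"
proof -
  have a: "A = (A - B) \<union> (A \<inter> B)" and b: "B = (B - A) \<union> (A \<inter> B)" by auto
  have fa: "fp A = fp (A - B) \<otimes> fp (A \<inter> B)"
    by (subst a) (rule fp_Un, use assms in auto)
  have fb: "fp B = fp (B - A) \<otimes> fp (A \<inter> B)"
    by (subst b) (rule fp_Un, use assms in auto)
  have fd: "fp ((A - B) \<union> (B - A)) = fp (A - B) \<otimes> fp (B - A)"
    by (rule fp_Un, use assms in auto)
  have V: "fp (A - B) \<in> V" "fp (B - A) \<in> V" "fp (A \<inter> B) \<in> V"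
    using assms by (auto intro!: fp_closed)
  then have C: "fp (A - B) \<in> carrier G" "fp (B - A) \<in> carrier G" "fp (A \<inter> B) \<in> carrier G"
    using V_car by auto
  have "fp A \<otimes> fp B = fp (A - B) \<otimes> (fp (A \<inter> B) \<otimes> fp (B - A)) \<otimes> fp (A \<inter> B)"
    unfolding fa fb using C by (simp add: m_assoc)
  also have "\<dots> = fp (A - B) \<otimes> fp (B - A) \<otimes> (fp (A \<inter> B) \<otimes> fp (A \<inter> B))"
    using C V_comm[OF V(3) V(2)] by (simp add: m_assoc)
  also have "\<dots> = fp (A - B) \<otimes> fp (B - A)"
    using C V_sq[OF V(3)] by simp
  finally show ?thesis using fd by simp
qed

lemma M_fp: "m \<in> M \<Longrightarrow> \<exists>S \<subseteq> Conj. fp S = m"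
  unfolding M_def
proof (induction m rule: generate.induct)
  case one
  then show ?case using fp_empty by (intro exI[of _ "{}"]) simp
next
  case (incl h)
  then show ?case using fp_single Conj_V by (intro exI[of _ "{h}"]) auto
next
  case (inv h)
  have "h \<in> V" using inv Conj_V by auto
  then have "inv\<^bsub>VG\<^esub> h = h" using VG_inv V_inv by simp
  then show ?case using inv fp_single Conj_V by (intro exI[of _ "{h}"]) auto
next
  case (eng h1 h2)
  obtain A where A: "A \<subseteq> Conj" "fp A = h1" using eng(3) by blast
  obtain B where B: "B \<subseteq> Conj" "fp B = h2" using eng(4) by blast
  have "fp A \<otimes> fp B = fp ((A - B) \<union> (B - A))"
    using A B Conj_fin Conj_V by (intro fp_symdiff) (auto intro: finite_subset)
  then show ?case using A B by (intro exI[of _ "(A - B) \<union> (B - A)"]) auto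
qed

lemma small:
  assumes v: "v \<in> V"
  shows "\<exists>S \<subseteq> Conj. card S \<le> p - 1 \<and> fp S = v"
proof -
  obtain S0 where "S0 \<subseteq> Conj" "fp S0 = v" using M_fp V_M v by blast
  then obtain S where S: "S \<subseteq> Conj" "fp S = v"
    and least: "\<And>S'. S' \<subseteq> Conj \<and> fp S' = v \<Longrightarrow> card S \<le> card S'"
    using ex_has_least_nat[of "\<lambda>S. S \<subseteq> Conj \<and> fp S = v" S0 card] by blast
  have Sfin: "finite S" using S Conj_fin finite_subset by blast
  have SV: "S \<subseteq> V" using S Conj_V by auto
  have "card S \<le> p - 1"
  proof (rule ccontr)
    assume "\<not> card S \<le> p - 1"
    then have "card V < card (Pow S)" using cardV Sfin card_Pow[of S]
      by (metis le_less_trans nat_less_le not_le power_strict_increasing_iff one_less_numeral_iff semiring_norm(76))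
    then have "\<not> inj_on fp (Pow S)"
    proof -
      have "fp ` Pow S \<subseteq> V" using SV by (auto intro!: fp_closed)
      then show ?thesis using card_inj_on_le[of fp "Pow S" V] V_fin \<open>card V < card (Pow S)\<close> by auto
    qed
    then obtain A B where AB: "A \<subseteq> S" "B \<subseteq> S" "A \<noteq> B" "fp A = fp B"
      unfolding inj_on_def by blast
    define D where "D = (A - B) \<union> (B - A)"
    have AV: "A \<subseteq> V" "B \<subseteq> V" using AB SV by auto
    have fD: "fp D = \<one>"
      unfolding D_def using fp_symdiff[of A B] AB AV Sfin V_sq[OF fp_closed[OF AV(1)]]
      by (metis finite_subset)
    have Dne: "D \<noteq> {}" unfolding D_def using AB by auto
    have DS: "D \<subseteq> S" unfolding D_def using AB by auto
    have "S = (S - D) \<union> D" using DS by auto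
    then have "fp S = fp (S - D) \<otimes> fp D"
      using fp_Un[of "S - D" D] Sfin DS SV by (metis Diff_disjoint Int_commute finite_Diff finite_subset Diff_subset subset_trans)
    moreover have "fp (S - D) \<in> V" using SV by (intro fp_closed) auto
    ultimately have "fp (S - D) = v" using fD S V_car by auto
    then have "card S \<le> card (S - D)" using least[of "S - D"] S by auto
    moreover have "card (S - D) < card S"
      using Sfin DS Dne by (intro psubset_card_mono) auto
    ultimately show False by simp
  qed
  then show ?thesis using S by blast
qed

lemma wd_set: "(\<forall>q\<in>set r. snd q \<in> A) \<Longrightarrow> \<forall>x\<in>set (wd c k r). fst x \<in> insert c A"
proof (induction r arbitrary: k)
  case Nil then show ?case by auto
next
  case (Cons q r)
  obtain i w where q: "q = (i, w)" by (cases q)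
  have "\<forall>x\<in>set (wd c i r). fst x \<in> insert c A" using Cons by auto
  then show ?case using Cons.prems q by auto
qed

lemma wd_car: "(\<forall>q\<in>set r. snd q \<in> carrier G) \<Longrightarrow> \<forall>x\<in>set (wd c k r). fst x \<in> carrier G"
  using wd_set[of r "carrier G" k] c_car by auto

lemma P_closed: "(\<forall>q\<in>set r. snd q \<in> carrier G) \<Longrightarrow> foldr (\<lambda>q a. conjf q \<otimes> a) r \<one> \<in> carrier G"
  by (induction r) (auto simp: conjf_def c_car)

lemma wd_eval: "(\<forall>q\<in>set r. snd q \<in> carrier G) \<Longrightarrow> sorted (map fst r) \<Longrightarrow> (\<forall>q\<in>set r. k \<le> fst q) \<Longrightarrow>
  word_eval G (wd c k r) = inv (c [^] k) \<otimes> foldr (\<lambda>q a. conjf q \<otimes> a) r \<one>"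
proof (induction r arbitrary: k)
  case Nil
  then show ?case using c_car by (simp add: we_rep_t)
next
  case (Cons q r)
  obtain i w where q: "q = (i, w)" by (cases q)
  have w: "w \<in> carrier G" using Cons.prems q by auto
  have ki: "k \<le> i" using Cons.prems q by auto
  have IH: "word_eval G (wd c i r) = inv (c [^] i) \<otimes> foldr (\<lambda>q a. conjf q \<otimes> a) r \<one>"
    using Cons.prems q by (intro Cons.IH) auto
  have Pc: "foldr (\<lambda>q a. conjf q \<otimes> a) r \<one> \<in> carrier G" using Cons.prems by (intro P_closed) auto
  define P where "P = foldr (\<lambda>q a. conjf q \<otimes> a) r \<one>"
  have Pc': "P \<in> carrier G" using Pc P_def by simp
  have lets: "\<forall>x\<in>set (wd c i r). fst x \<in> carrier G" using Cons.prems by (intro wd_car) auto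
  have ci: "c [^] i = c [^] k \<otimes> c [^] (i - k)" using ki c_car by (simp add: nat_pow_mult)
  have "word_eval G (wd c k (q # r)) = c [^] (i - k) \<otimes> (w \<otimes> (inv (c [^] i) \<otimes> P))"
    unfolding q wd.simps using we_append[of "replicate (i - k) (c, False)" "(w, False) # wd c i r"] c_car w lets
    by (simp add: we_rep_f we_cons IH P_def)
  also have "\<dots> = inv (c [^] k) \<otimes> (c [^] i \<otimes> w \<otimes> inv (c [^] i) \<otimes> P)"
    unfolding ci using c_car w Pc' by (simp add: m_assoc inv_solve_left)
  finally show ?case unfolding q P_def by (simp add: conjf_def)
qed

lemma wd_len: "sorted (map fst r) \<Longrightarrow> (\<forall>q\<in>set r. k \<le> fst q \<and> fst q \<le> n) \<Longrightarrow> k \<le> n \<Longrightarrow>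
  length (wd c k r) \<le> length r + 2 * n - k"
proof (induction r arbitrary: k)
  case Nil then show ?case by simp
next
  case (Cons q r)
  obtain i w where q: "q = (i, w)" by (cases q)
  have "length (wd c i r) \<le> length r + 2 * n - i" using Cons q by (intro Cons.IH) auto
  moreover have "k \<le> i" "i \<le> n" using Cons.prems q by auto
  ultimately show ?case using q by simp
qed

lemma wd_filter: "(\<forall>q\<in>set r. snd q \<in> W) \<Longrightarrow>
  length (filter (\<lambda>x. fst x \<in> W) (wd c k r)) = length r"
proof (induction r arbitrary: k)
  case Nil
  have "c \<notin> W" using c_notV W_sub by auto
  then show ?case by (simp add: filter_empty_conv)
next
  case (Cons q r)
  obtain i w where q: "q = (i, w)" by (cases q)
  have "length (filter (\<lambda>x. fst x \<in> W) (wd c i r)) = length r" using Cons by auto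
  moreover have "filter (\<lambda>x. fst x \<in> W) (replicate (i - k) (c, False)) = []"
  proof -
    have "c \<notin> W" using c_notV W_sub by auto
    then show ?thesis by (simp add: filter_empty_conv)
  qed
  ultimately show ?case using q Cons.prems by simp
qed

lemma fp_list: "distinct L \<Longrightarrow> set L \<subseteq> V \<Longrightarrow> fp (set L) = foldr (\<lambda>x a. x \<otimes> a) L \<one>"
proof (induction L)
  case Nil then show ?case using fp_empty by simp
next
  case (Cons x L)
  have "fp (insert x (set L)) = x \<otimes> fp (set L)"
    using comm_monoid.finprod_insert[OF VGcm, of "set L" x "\<lambda>x. x"] Cons.prems by auto
  then show ?case using Cons by simp
qed

lemma foldr_g: "(\<forall>x\<in>set L. conjf (g x) = x) \<Longrightarrow>
  foldr (\<lambda>q a. conjf q \<otimes> a) (map g L) \<one> = foldr (\<lambda>x a. x \<otimes> a) L \<one>"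
  by (induction L) auto

theorem main: "\<forall>v \<in> V. \<exists>ws.
           (\<forall>x \<in> set ws. fst x \<in> insert c W) \<and>
           length ws \<le> 3 * (p - 1) \<and>
           length (filter (\<lambda>x. fst x \<in> W) ws) \<le> p - 1 \<and>
           word_eval G ws = v"
proof
  fix v assume v: "v \<in> V"
  obtain S where S: "S \<subseteq> Conj" "card S \<le> p - 1" "fp S = v" using small[OF v] by blast
  have "\<forall>x\<in>S. \<exists>q. q \<in> {..<p} \<times> W \<and> conjf q = x" using S(1) unfolding Conj_def by blast
  then obtain g where g: "\<And>x. x \<in> S \<Longrightarrow> g x \<in> {..<p} \<times> W \<and> conjf (g x) = x" by metis
  obtain xs where xs: "set xs = S" "distinct xs" using finite_distinct_list[of S] Conj_fin S(1) finite_subset by blast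
  define L where "L = sort_key (\<lambda>x. fst (g x)) xs"
  define Q where "Q = map g L"
  have L: "set L = S" "distinct L" "length L = card S" using xs unfolding L_def by (auto simp: distinct_card)
  have Qs: "sorted (map fst Q)" unfolding Q_def L_def by (simp add: o_def)
  have Qset: "\<forall>q\<in>set Q. fst q < p \<and> snd q \<in> W" unfolding Q_def using g L by fastforce
  have SV: "S \<subseteq> V" using S Conj_V by auto
  have "foldr (\<lambda>q a. conjf q \<otimes> a) Q \<one> = foldr (\<lambda>x a. x \<otimes> a) L \<one>"
    unfolding Q_def using g L by (intro foldr_g) auto
  also have "\<dots> = v" using fp_list[of L] L SV S by simp
  finally have PQ: "foldr (\<lambda>q a. conjf q \<otimes> a) Q \<one> = v" .
  define ws where "ws = wd c 0 Q"
  have "word_eval G ws = inv (c [^] (0::nat)) \<otimes> foldr (\<lambda>q a. conjf q \<otimes> a) Q \<one>"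
    unfolding ws_def using Qs Qset W_sub V_car by (intro wd_eval) auto
  then have "word_eval G ws = v" using PQ v V_car by auto
  moreover have "\<forall>x \<in> set ws. fst x \<in> insert c W" unfolding ws_def using Qset by (intro wd_set) auto
  moreover have "length ws \<le> length Q + 2 * (p - 1) - 0"
    unfolding ws_def using Qs Qset by (intro wd_len) auto
  moreover have "length Q \<le> p - 1" unfolding Q_def using L S by simp
  moreover have "length (filter (\<lambda>x. fst x \<in> W) ws) = length Q"
    unfolding ws_def using Qset by (intro wd_filter) auto
  ultimately show "\<exists>ws.
           (\<forall>x \<in> set ws. fst x \<in> insert c W) \<and>
           length ws \<le> 3 * (p - 1) \<and>
           length (filter (\<lambda>x. fst x \<in> W) ws) \<le> p - 1 \<and>
           word_eval G ws = v" by (intro exI[of _ ws]) auto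
qed

end

theorem lemma5:
  fixes p :: nat and c :: "(nat set \<times> nat) set" and W :: "(nat set \<times> nat) set set"
  assumes "prime p" and "odd p"
    and "c \<in> Cp p" and "c \<noteq> \<one>\<^bsub>Gp p\<^esub>"
    and "finite W" and "W \<subseteq> Vp p"
    and "generate (Gp p) (insert c W) = carrier (Gp p)"
  shows "\<forall>v \<in> Vp p. \<exists>ws :: ((nat set \<times> nat) set \<times> bool) list.
           (\<forall>x \<in> set ws. fst x \<in> insert c W) \<and>
           length ws \<le> 3 * (p - 1) \<and>
           length (filter (\<lambda>x. fst x \<in> W) ws) \<le> p - 1 \<and>
           word_eval (Gp p) ws = v"
proof -
  have p: "0 < p" using assms(1) prime_gt_0_nat by blast
  obtain j where j: "j < p" "c = cs p ({}, j)" using Cp_elem[OF p assms(3)] by blast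
  have jc: "({}, j) \<in> carrier (Wp p)" using j p by (simp add: Wp_carrier)
  have cpow: "\<And>n::nat. c [^]\<^bsub>Gp p\<^esub> n = cs p ({}, (j * n) mod p)"
    using c_pow[OF p j(1)] j(2) by simp
  have "absl (Gp p) (Vp p) c W p"
  proof (rule absl.intro[OF Gp_group[OF p]], rule absl_axioms.intro)
    show "subgroup (Vp p) (Gp p)" by (rule Vp_subgroup[OF p])
    show "\<And>x y. x \<in> Vp p \<Longrightarrow> y \<in> Vp p \<Longrightarrow> x \<otimes>\<^bsub>Gp p\<^esub> y = y \<otimes>\<^bsub>Gp p\<^esub> x"
      by (rule Vp_comm[OF p])
    show "\<And>x. x \<in> Vp p \<Longrightarrow> x \<otimes>\<^bsub>Gp p\<^esub> x = \<one>\<^bsub>Gp p\<^esub>" by (rule Vp_sq[OF p])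
    show "\<And>g x. g \<in> carrier (Gp p) \<Longrightarrow> x \<in> Vp p \<Longrightarrow> g \<otimes>\<^bsub>Gp p\<^esub> x \<otimes>\<^bsub>Gp p\<^esub> inv\<^bsub>Gp p\<^esub> g \<in> Vp p"
      by (rule Vp_norm[OF p])
    show "c \<in> carrier (Gp p)" using cs_car[OF p jc] j(2) by simp
    show "c \<noteq> \<one>\<^bsub>Gp p\<^esub>" by (rule assms(4))
    show "c [^]\<^bsub>Gp p\<^esub> p = \<one>\<^bsub>Gp p\<^esub>" using cpow[of p] Gp_one[OF p] by simp
    show "\<And>k::nat. c [^]\<^bsub>Gp p\<^esub> k \<in> Vp p \<Longrightarrow> c [^]\<^bsub>Gp p\<^esub> k = \<one>\<^bsub>Gp p\<^esub>"
    proof -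
      fix k :: nat assume "c [^]\<^bsub>Gp p\<^esub> k \<in> Vp p"
      then have "cs p ({}, (j * k) mod p) \<in> cs p ` {a \<in> carrier (Wp p). snd a = 0}"
        using cpow[of k] Vp_char[OF p] by simp
      then obtain a where a: "a \<in> carrier (Wp p)" "snd a = 0" "cs p ({}, (j * k) mod p) = cs p a" by blast
      have "({}, (j * k) mod p) \<in> carrier (Wp p)" using p by (simp add: Wp_carrier)
      then have "snd ({}::nat set, (j * k) mod p) = snd a" using cs_snd[OF p _ a(1) a(3)] by blast
      then have "(j * k) mod p = 0" using a(2) by simp
      then show "c [^]\<^bsub>Gp p\<^esub> k = \<one>\<^bsub>Gp p\<^esub>" using cpow[of k] Gp_one[OF p] by simp
    qed
    show "W \<subseteq> Vp p" by (rule assms(6))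
    show "finite (Vp p)" using Vp_fin_card[OF p] by blast
    show "card (Vp p) \<le> 2 ^ (p - 1)" using Vp_fin_card[OF p] by blast
    show "generate (Gp p) (insert c W) = carrier (Gp p)" by (rule assms(7))
    show "0 < p" by (rule p)
  qed
  then show ?thesis by (rule absl.main)
qed

end
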